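(* Let $\{B(X)\}_{X\in\mathbb R^2}$ be a Brownian motion indexed by $(\mathbb R^2,d_1)$ with root $0$, i.e. a centered Gaussian process with $B(0)=0$ and $\mathrm{Cov}(B(X),B(Y))=\tfrac12\big(d_1(0,X)+d_1(0,Y)-d_1(X,Y)\big)$. Let $A_1,\ldots,A_n\in\mathbb R^2$. Then there exist a permutation $\sigma$ of $\{1,\ldots,n\}$, an integer $q\ge1$ and positive integers $n_1,\ldots,n_q$ with $n_1+\cdots+n_q=n$ such that, setting $N_0=0$ and $N_l=n_1+\cdots+n_l$, the random vectors $V_l=\big(B(A_{\sigma(N_{l-1}+1)}),\ldots,B(A_{\sigma(N_l)})\big)$, $l=1,\ldots,q$, are mutually independent, and for each $l$ the vector $V_l$ has independent increments, i.e. the random variables $B(A_{\sigma(N_{l-1}+1)})$ and $B(A_{\sigma(j+1)})-B(A_{\sigma(j)})$ for $N_{l-1}+1\le j<N_l$ are mutually independent.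
   Context: $|\cdot|$ is the Euclidean norm. The radial metric on $\mathbb R^2$ is $d_1(A,B)=|A-B|$ if $A=aB$ for some $a\in\mathbb R$, and $d_1(A,B)=|A|+|B|$ otherwise. *)

theory Defs
  imports "HOL-Probability.Probability" "HOL-Combinatorics.Permutations"
begin

definition radial_dist :: "real^2 \<Rightarrow> real^2 \<Rightarrow> real" where
  "radial_dist A B = (if \<exists>a::real. A = a *\<^sub>R B then norm (A - B) else norm A + norm B)"

definition centered_gaussian_rv :: "'a measure \<Rightarrow> ('a \<Rightarrow> real) \<Rightarrow> real \<Rightarrow> bool" where
  "centered_gaussian_rv M X v \<longleftrightarrow>
     X \<in> borel_measurable M \<and> v \<ge> 0 \<and>
     (if v = 0 then (AE \<omega> in M. X \<omega> = 0)
      else distributed M lborel X (normal_density 0 (sqrt v)))"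

definition centered_gaussian_process ::
    "'a measure \<Rightarrow> ('i \<Rightarrow> 'a \<Rightarrow> real) \<Rightarrow> ('i \<Rightarrow> 'i \<Rightarrow> real) \<Rightarrow> bool" where
  "centered_gaussian_process M B K \<longleftrightarrow>
     prob_space M \<and> (\<forall>X. B X \<in> borel_measurable M) \<and>
     (\<forall>(m::nat) (P::nat \<Rightarrow> 'i) (c::nat \<Rightarrow> real).
        centered_gaussian_rv M (\<lambda>\<omega>. \<Sum>i<m. c i * B (P i) \<omega>)
          (\<Sum>i<m. \<Sum>j<m. c i * c j * K (P i) (P j)))"

definition radial_brownian_motion :: "'a measure \<Rightarrow> (real^2 \<Rightarrow> 'a \<Rightarrow> real) \<Rightarrow> bool" where
  "radial_brownian_motion M B \<longleftrightarrow>
     centered_gaussian_process M B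
       (\<lambda>X Y. (radial_dist 0 X + radial_dist 0 Y - radial_dist X Y) / 2) \<and>
     (AE \<omega> in M. B 0 \<omega> = 0)"

end

theory Submission
  imports Defs "HOL-Analysis.Complex_Transcendental" "HOL-Library.List_Lexorder"
begin

lemma uniq1:
  assumes N1: "prob_space N1" and N2: "prob_space N2"
    and X1[measurable]: "X1 \<in> borel_measurable N1" and X2[measurable]: "X2 \<in> borel_measurable N2"
    and ch: "\<And>t. integral\<^sup>L N1 (\<lambda>\<omega>. iexp (t * X1 \<omega>)) = integral\<^sup>L N2 (\<lambda>\<omega>. iexp (t * X2 \<omega>))"
    and A: "A \<in> sets borel"
  shows "measure N1 {\<omega>\<in>space N1. X1 \<omega> \<in> A} = measure N2 {\<omega>\<in>space N2. X2 \<omega> \<in> A}"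
proof -
  have r1: "real_distribution (distr N1 borel X1)"
    using prob_space.real_distribution_distr[OF N1] by simp
  have r2: "real_distribution (distr N2 borel X2)"
    using prob_space.real_distribution_distr[OF N2] by simp
  have "char (distr N1 borel X1) = char (distr N2 borel X2)"
  proof
    fix t
    show "char (distr N1 borel X1) t = char (distr N2 borel X2) t"
      unfolding char_def using ch[of t]
      by (simp add: integral_distr)
  qed
  then have eq: "distr N1 borel X1 = distr N2 borel X2"
    using Levy_uniqueness r1 r2 by blast
  have "measure N1 {\<omega>\<in>space N1. X1 \<omega> \<in> A} = measure (distr N1 borel X1) A"
    using A by (simp add: measure_distr vimage_def Int_def conj_commute)
  also have "\<dots> = measure (distr N2 borel X2) A" by (simp add: eq)
  also have "\<dots> = measure N2 {\<omega>\<in>space N2. X2 \<omega> \<in> A}"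
    using A by (simp add: measure_distr vimage_def Int_def conj_commute)
  finally show ?thesis .
qed

lemma dens_prob:
  assumes N: "prob_space N" and g[measurable]: "g \<in> borel_measurable N"
    and pos: "\<And>\<omega>. \<omega> \<in> space N \<Longrightarrow> 0 \<le> g \<omega>" and int: "integrable N g" and one: "integral\<^sup>L N g = 1"
  shows "prob_space (density N (\<lambda>\<omega>. ennreal (g \<omega>)))"
proof (rule prob_spaceI)
  have "emeasure (density N (\<lambda>\<omega>. ennreal (g \<omega>))) (space N) = (\<integral>\<^sup>+ x. ennreal (g x) \<partial>N)"
    by (auto simp: emeasure_density intro!: nn_integral_cong split: split_indicator)
  also have "\<dots> = ennreal (integral\<^sup>L N g)"
    using pos int by (intro nn_integral_eq_integral) (auto simp: AE_I2)
  finally show "emeasure (density N (\<lambda>\<omega>. ennreal (g \<omega>))) (space (density N (\<lambda>\<omega>. ennreal (g \<omega>)))) = 1"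
    using one by simp
qed

lemma dens_measure:
  assumes N: "prob_space N" and g[measurable]: "g \<in> borel_measurable N"
    and pos: "\<And>\<omega>. \<omega> \<in> space N \<Longrightarrow> 0 \<le> g \<omega>" and int: "integrable N g" and S: "S \<in> sets N"
  shows "measure (density N (\<lambda>\<omega>. ennreal (g \<omega>))) S = integral\<^sup>L N (\<lambda>\<omega>. g \<omega> * indicator S \<omega>)"
proof -
  have int2: "integrable N (\<lambda>\<omega>. g \<omega> * indicator S \<omega>)"
    using int S by (intro integrable_real_mult_indicator) auto
  have "emeasure (density N (\<lambda>\<omega>. ennreal (g \<omega>))) S = (\<integral>\<^sup>+ x. ennreal (g x * indicator S x) \<partial>N)"
    using S by (auto simp: emeasure_density intro!: nn_integral_cong split: split_indicator)
  also have "\<dots> = ennreal (integral\<^sup>L N (\<lambda>\<omega>. g \<omega> * indicator S \<omega>))"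
    using pos int2 by (intro nn_integral_eq_integral) (auto simp: AE_I2 indicator_def)
  finally show ?thesis
    using pos S by (simp add: measure_def integral_nonneg_AE AE_I2 indicator_def)
qed

lemma K0:
  assumes N: "prob_space N" and Y[measurable]: "Y \<in> borel_measurable N"
    and h[measurable]: "h \<in> borel_measurable N" and hb: "\<And>\<omega>. \<omega> \<in> space N \<Longrightarrow> \<bar>h \<omega>\<bar> \<le> 1"
    and ch: "\<And>u. integral\<^sup>L N (\<lambda>\<omega>. complex_of_real (h \<omega>) * iexp (u * Y \<omega>))
               = complex_of_real (integral\<^sup>L N h) * integral\<^sup>L N (\<lambda>\<omega>. iexp (u * Y \<omega>))"
    and A[measurable]: "A \<in> sets borel"
  shows "integral\<^sup>L N (\<lambda>\<omega>. h \<omega> * indicator A (Y \<omega>)) = integral\<^sup>L N h * measure N {\<omega>\<in>space N. Y \<omega> \<in> A}"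
proof -
  interpret prob_space N by fact
  have ih: "integrable N h"
    using hb by (intro integrable_const_bound[where B=1]) (auto simp: AE_I2)
  have ihA: "integrable N (\<lambda>\<omega>. h \<omega> * indicator A (Y \<omega>))"
    using hb by (intro integrable_const_bound[where B=1]) (auto simp: AE_I2 indicator_def)
  have iA: "integrable N (\<lambda>\<omega>. indicator A (Y \<omega>) :: real)"
    by (intro integrable_const_bound[where B=1]) (auto simp: AE_I2 indicator_def)
  have PA: "integral\<^sup>L N (\<lambda>\<omega>. indicator A (Y \<omega>) :: real) = measure N {\<omega>\<in>space N. Y \<omega> \<in> A}"
  proof -
    have "integral\<^sup>L N (\<lambda>\<omega>. indicator A (Y \<omega>) :: real) = integral\<^sup>L N (indicator {\<omega>\<in>space N. Y \<omega> \<in> A})"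
      by (intro Bochner_Integration.integral_cong) (auto simp: indicator_def)
    then show ?thesis by simp
  qed
  have hb2: "0 \<le> 1 + h \<omega>" if "\<omega> \<in> space N" for \<omega> using hb[OF that] by arith
  define c where "c = 1 + integral\<^sup>L N h"
  have c0: "0 \<le> c"
  proof -
    have "0 \<le> integral\<^sup>L N (\<lambda>\<omega>. 1 + h \<omega>)"
      using hb2 by (intro integral_nonneg_AE AE_I2) auto
    then show ?thesis using ih by (simp add: c_def prob_space)
  qed
  show ?thesis
  proof (cases "c = 0")
    case True
    have "integral\<^sup>L N (\<lambda>\<omega>. 1 + h \<omega>) = 0" using True ih by (simp add: c_def prob_space)
    then have "AE \<omega> in N. 1 + h \<omega> = 0"
      using hb2 ih by (subst integral_nonneg_eq_0_iff_AE[symmetric]) (auto intro!: AE_I2)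
    then have ae: "AE \<omega> in N. h \<omega> = -1" by auto
    have "integral\<^sup>L N (\<lambda>\<omega>. h \<omega> * indicator A (Y \<omega>)) = integral\<^sup>L N (\<lambda>\<omega>. - indicator A (Y \<omega>))"
      using ae by (intro integral_cong_AE) auto
    moreover have "integral\<^sup>L N h = integral\<^sup>L N (\<lambda>_. -1)"
      using ae by (intro integral_cong_AE) auto
    ultimately show ?thesis using PA by (simp add: prob_space)
  next
    case False
    then have cpos: "0 < c" using c0 by simp
    define g where "g = (\<lambda>\<omega>. (1 + h \<omega>) / c)"
    have g[measurable]: "g \<in> borel_measurable N" unfolding g_def by measurable
    have gpos: "\<And>\<omega>. \<omega> \<in> space N \<Longrightarrow> 0 \<le> g \<omega>"
      using hb2 cpos by (auto simp: g_def)
    have ig: "integrable N g" unfolding g_def using ih by auto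
    have g1: "integral\<^sup>L N g = 1"
      unfolding g_def using ih cpos by (simp add: prob_space c_def)
    define N' where "N' = density N (\<lambda>\<omega>. ennreal (g \<omega>))"
    have N': "prob_space N'" unfolding N'_def by (rule dens_prob[OF N g gpos ig g1])
    have Y': "Y \<in> borel_measurable N'" unfolding N'_def by simp
    have sp: "space N' = space N" unfolding N'_def by simp
    have "measure N' {\<omega>\<in>space N'. Y \<omega> \<in> A} = measure N {\<omega>\<in>space N. Y \<omega> \<in> A}"
    proof (rule uniq1[OF N' N Y' Y _ A])
      fix t
      have ie: "integrable N (\<lambda>\<omega>. iexp (t * Y \<omega>))"
        by (intro integrable_const_bound[where B=1]) (auto simp: AE_I2 norm_exp_i_times)
      have ihe: "integrable N (\<lambda>\<omega>. complex_of_real (h \<omega>) * iexp (t * Y \<omega>))"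
        using hb by (intro integrable_const_bound[where B=1])
          (auto simp: AE_I2 norm_mult norm_exp_i_times)
      have "integral\<^sup>L N' (\<lambda>\<omega>. iexp (t * Y \<omega>)) = integral\<^sup>L N (\<lambda>\<omega>. g \<omega> *\<^sub>R iexp (t * Y \<omega>))"
        unfolding N'_def using gpos by (intro integral_density) (auto simp: AE_I2)
      also have "\<dots> = integral\<^sup>L N (\<lambda>\<omega>. complex_of_real (1/c) * (iexp (t * Y \<omega>) + complex_of_real (h \<omega>) * iexp (t * Y \<omega>)))"
        by (intro Bochner_Integration.integral_cong) (auto simp: g_def scaleR_conv_of_real add_divide_distrib distrib_left distrib_right)
      also have "\<dots> = complex_of_real (1/c) * (integral\<^sup>L N (\<lambda>\<omega>. iexp (t * Y \<omega>)) + integral\<^sup>L N (\<lambda>\<omega>. complex_of_real (h \<omega>) * iexp (t * Y \<omega>)))"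
        using ie ihe by simp
      also have "\<dots> = complex_of_real (1/c) * (integral\<^sup>L N (\<lambda>\<omega>. iexp (t * Y \<omega>)) + complex_of_real (integral\<^sup>L N h) * integral\<^sup>L N (\<lambda>\<omega>. iexp (t * Y \<omega>)))"
        by (simp only: ch)
      also have "\<dots> = complex_of_real (1/c) * complex_of_real c * integral\<^sup>L N (\<lambda>\<omega>. iexp (t * Y \<omega>))"
        unfolding c_def of_real_add of_real_1 by (simp only: mult.assoc distrib_right mult_1_left)
      also have "\<dots> = integral\<^sup>L N (\<lambda>\<omega>. iexp (t * Y \<omega>))"
        using cpos by (simp flip: of_real_mult)
      finally show "integral\<^sup>L N' (\<lambda>\<omega>. iexp (t * Y \<omega>)) = integral\<^sup>L N (\<lambda>\<omega>. iexp (t * Y \<omega>))" .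
    qed
    moreover have "measure N' {\<omega>\<in>space N'. Y \<omega> \<in> A} = integral\<^sup>L N (\<lambda>\<omega>. g \<omega> * indicator {\<omega>\<in>space N. Y \<omega> \<in> A} \<omega>)"
      unfolding N'_def by (subst dens_measure[OF N g gpos ig]) auto
    moreover have "integral\<^sup>L N (\<lambda>\<omega>. g \<omega> * indicator {\<omega>\<in>space N. Y \<omega> \<in> A} \<omega>)
        = (integral\<^sup>L N (\<lambda>\<omega>. indicator A (Y \<omega>)) + integral\<^sup>L N (\<lambda>\<omega>. h \<omega> * indicator A (Y \<omega>))) / c"
    proof -
      have "integral\<^sup>L N (\<lambda>\<omega>. g \<omega> * indicator {\<omega>\<in>space N. Y \<omega> \<in> A} \<omega>)
          = integral\<^sup>L N (\<lambda>\<omega>. (indicator A (Y \<omega>) + h \<omega> * indicator A (Y \<omega>)) / c)"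
        by (intro Bochner_Integration.integral_cong) (auto simp: g_def indicator_def field_simps)
      also have "\<dots> = (integral\<^sup>L N (\<lambda>\<omega>. indicator A (Y \<omega>)) + integral\<^sup>L N (\<lambda>\<omega>. h \<omega> * indicator A (Y \<omega>))) / c"
        using iA ihA by simp
      finally show ?thesis .
    qed
    ultimately show ?thesis using PA cpos by (simp add: c_def field_simps)
  qed
qed

definition chf :: "'a measure \<Rightarrow> ('a \<Rightarrow> real) \<Rightarrow> complex" where
  "chf N W = integral\<^sup>L N (\<lambda>\<omega>. iexp (W \<omega>))"

lemma iexp_add: "iexp (a + b) = iexp a * iexp b"
  by (simp add: distrib_left exp_add)

lemma cos_iexp: "complex_of_real (cos x) * iexp v = (iexp (x + v) + iexp (- x + v)) / 2"
proof -
  have "complex_of_real (cos x) = cos (complex_of_real x)" by (simp add: cos_of_real)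
  also have "\<dots> = (iexp x + iexp (-x)) / 2" by (simp add: cos_exp_eq)
  finally have c: "complex_of_real (cos x) = (iexp x + iexp (-x)) / 2" .
  have e: "iexp (x + v) + iexp (- x + v) = (iexp x + iexp (-x)) * iexp v"
    by (simp only: iexp_add distrib_right)
  show ?thesis unfolding c e by (simp only: times_divide_eq_left)
qed

lemma sin_iexp: "complex_of_real (sin x) * iexp v = (iexp (x + v) - iexp (- x + v)) / (2 * \<i>)"
proof -
  have "complex_of_real (sin x) = sin (complex_of_real x)" by (simp add: sin_of_real)
  also have "\<dots> = (iexp x - iexp (-x)) / (2 * \<i>)" by (simp add: sin_exp_eq)
  finally have c: "complex_of_real (sin x) = (iexp x - iexp (-x)) / (2 * \<i>)" .
  have e: "iexp (x + v) - iexp (- x + v) = (iexp x - iexp (-x)) * iexp v"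
    by (simp only: iexp_add left_diff_distrib)
  show ?thesis unfolding c e by (simp only: times_divide_eq_left)
qed

lemma iexp_cos_sin: "iexp x = complex_of_real (cos x) + \<i> * complex_of_real (sin x)"
  by (simp add: cis_conv_exp[symmetric] complex_eq_iff)

lemma integrable_iexp[intro]:
  assumes "prob_space N" and [measurable]: "W \<in> borel_measurable N"
  shows "integrable N (\<lambda>\<omega>. iexp (W \<omega>))"
proof -
  interpret prob_space N by fact
  show ?thesis by (intro integrable_const_bound[where B=1]) (auto intro!: AE_I2 simp: norm_exp_i_times)
qed

lemma K:
  assumes N: "prob_space N" and S[measurable]: "S \<in> borel_measurable N" and Y[measurable]: "Y \<in> borel_measurable N"
    and F: "\<And>u. chf N (\<lambda>\<omega>. S \<omega> + u * Y \<omega>) = chf N S * chf N (\<lambda>\<omega>. u * Y \<omega>)"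
    and F': "\<And>u. chf N (\<lambda>\<omega>. - S \<omega> + u * Y \<omega>) = chf N (\<lambda>\<omega>. - S \<omega>) * chf N (\<lambda>\<omega>. u * Y \<omega>)"
    and A[measurable]: "A \<in> sets borel"
  shows "integral\<^sup>L N (\<lambda>\<omega>. iexp (S \<omega>) * indicator A (Y \<omega>)) = chf N S * measure N {\<omega>\<in>space N. Y \<omega> \<in> A}"
proof -
  interpret prob_space N by fact
  let ?P = "measure N {\<omega>\<in>space N. Y \<omega> \<in> A}"
  have i1: "integrable N (\<lambda>\<omega>. iexp (S \<omega> + u * Y \<omega>))" for u by (intro integrable_iexp N) auto
  have i2: "integrable N (\<lambda>\<omega>. iexp (- S \<omega> + u * Y \<omega>))" for u by (intro integrable_iexp N) auto
  have i3: "integrable N (\<lambda>\<omega>. iexp (S \<omega>))" by (intro integrable_iexp N) auto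
  have i4: "integrable N (\<lambda>\<omega>. iexp (- S \<omega>))" by (intro integrable_iexp N) auto
  have Ecos: "complex_of_real (integral\<^sup>L N (\<lambda>\<omega>. cos (S \<omega>))) = (chf N S + chf N (\<lambda>\<omega>. - S \<omega>)) / 2"
  proof -
    have "complex_of_real (integral\<^sup>L N (\<lambda>\<omega>. cos (S \<omega>))) = integral\<^sup>L N (\<lambda>\<omega>. complex_of_real (cos (S \<omega>)) * iexp 0)"
      by simp
    also have "\<dots> = integral\<^sup>L N (\<lambda>\<omega>. (iexp (S \<omega>) + iexp (- S \<omega>)) / 2)"
      by (subst cos_iexp) simp
    also have "\<dots> = (chf N S + chf N (\<lambda>\<omega>. - S \<omega>)) / 2"
      using i3 i4 by (simp add: chf_def)
    finally show ?thesis .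
  qed
  have Esin: "complex_of_real (integral\<^sup>L N (\<lambda>\<omega>. sin (S \<omega>))) = (chf N S - chf N (\<lambda>\<omega>. - S \<omega>)) / (2 * \<i>)"
  proof -
    have "complex_of_real (integral\<^sup>L N (\<lambda>\<omega>. sin (S \<omega>))) = integral\<^sup>L N (\<lambda>\<omega>. complex_of_real (sin (S \<omega>)) * iexp 0)"
      by simp
    also have "\<dots> = integral\<^sup>L N (\<lambda>\<omega>. (iexp (S \<omega>) - iexp (- S \<omega>)) / (2 * \<i>))"
      by (subst sin_iexp) simp
    also have "\<dots> = (chf N S - chf N (\<lambda>\<omega>. - S \<omega>)) / (2 * \<i>)"
      using i3 i4 by (simp add: chf_def)
    finally show ?thesis .
  qed
  have c: "integral\<^sup>L N (\<lambda>\<omega>. cos (S \<omega>) * indicator A (Y \<omega>)) = integral\<^sup>L N (\<lambda>\<omega>. cos (S \<omega>)) * ?P"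
  proof (rule K0[OF N Y _ _ _ A])
    fix u
    have "integral\<^sup>L N (\<lambda>\<omega>. complex_of_real (cos (S \<omega>)) * iexp (u * Y \<omega>))
        = integral\<^sup>L N (\<lambda>\<omega>. (iexp (S \<omega> + u * Y \<omega>) + iexp (- S \<omega> + u * Y \<omega>)) / 2)"
      by (subst cos_iexp) simp
    also have "\<dots> = (chf N (\<lambda>\<omega>. S \<omega> + u * Y \<omega>) + chf N (\<lambda>\<omega>. - S \<omega> + u * Y \<omega>)) / 2"
      using i1 i2 by (simp add: chf_def)
    also have "\<dots> = (chf N S + chf N (\<lambda>\<omega>. - S \<omega>)) / 2 * chf N (\<lambda>\<omega>. u * Y \<omega>)"
      unfolding F F' by (simp add: field_simps)
    finally show "integral\<^sup>L N (\<lambda>\<omega>. complex_of_real (cos (S \<omega>)) * iexp (u * Y \<omega>)) =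
         complex_of_real (integral\<^sup>L N (\<lambda>\<omega>. cos (S \<omega>))) * integral\<^sup>L N (\<lambda>\<omega>. iexp (u * Y \<omega>))"
      by (simp add: Ecos chf_def)
  qed auto
  have s: "integral\<^sup>L N (\<lambda>\<omega>. sin (S \<omega>) * indicator A (Y \<omega>)) = integral\<^sup>L N (\<lambda>\<omega>. sin (S \<omega>)) * ?P"
  proof (rule K0[OF N Y _ _ _ A])
    fix u
    have "integral\<^sup>L N (\<lambda>\<omega>. complex_of_real (sin (S \<omega>)) * iexp (u * Y \<omega>))
        = integral\<^sup>L N (\<lambda>\<omega>. (iexp (S \<omega> + u * Y \<omega>) - iexp (- S \<omega> + u * Y \<omega>)) / (2 * \<i>))"
      by (subst sin_iexp) simp
    also have "\<dots> = (chf N (\<lambda>\<omega>. S \<omega> + u * Y \<omega>) - chf N (\<lambda>\<omega>. - S \<omega> + u * Y \<omega>)) / (2 * \<i>)"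
      using i1 i2 by (simp add: chf_def)
    also have "\<dots> = (chf N S - chf N (\<lambda>\<omega>. - S \<omega>)) / (2 * \<i>) * chf N (\<lambda>\<omega>. u * Y \<omega>)"
      unfolding F F' by (simp add: field_simps)
    finally show "integral\<^sup>L N (\<lambda>\<omega>. complex_of_real (sin (S \<omega>)) * iexp (u * Y \<omega>)) =
         complex_of_real (integral\<^sup>L N (\<lambda>\<omega>. sin (S \<omega>))) * integral\<^sup>L N (\<lambda>\<omega>. iexp (u * Y \<omega>))"
      by (simp add: Esin chf_def)
  qed auto
  have ic: "integrable N (\<lambda>\<omega>. cos (S \<omega>) * indicator A (Y \<omega>))"
    by (intro integrable_const_bound[where B=1]) (auto intro!: AE_I2 simp: indicator_def)
  have is': "integrable N (\<lambda>\<omega>. sin (S \<omega>) * indicator A (Y \<omega>))"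
    by (intro integrable_const_bound[where B=1]) (auto intro!: AE_I2 simp: indicator_def)
  have ic2: "integrable N (\<lambda>\<omega>. cos (S \<omega>))"
    by (intro integrable_const_bound[where B=1]) (auto intro!: AE_I2)
  have is2: "integrable N (\<lambda>\<omega>. sin (S \<omega>))"
    by (intro integrable_const_bound[where B=1]) (auto intro!: AE_I2)
  have "integral\<^sup>L N (\<lambda>\<omega>. iexp (S \<omega>) * indicator A (Y \<omega>))
     = integral\<^sup>L N (\<lambda>\<omega>. complex_of_real (cos (S \<omega>) * indicator A (Y \<omega>)) + \<i> * complex_of_real (sin (S \<omega>) * indicator A (Y \<omega>)))"
    by (intro Bochner_Integration.integral_cong refl) (simp add: iexp_cos_sin[of "S _"] indicator_def)
  also have "\<dots> = complex_of_real (integral\<^sup>L N (\<lambda>\<omega>. cos (S \<omega>) * indicator A (Y \<omega>))) + \<i> * complex_of_real (integral\<^sup>L N (\<lambda>\<omega>. sin (S \<omega>) * indicator A (Y \<omega>)))"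
    using ic is' by (simp del: of_real_mult)
  also have "\<dots> = (complex_of_real (integral\<^sup>L N (\<lambda>\<omega>. cos (S \<omega>))) + \<i> * complex_of_real (integral\<^sup>L N (\<lambda>\<omega>. sin (S \<omega>)))) * complex_of_real ?P"
    by (simp add: c s algebra_simps)
  also have "complex_of_real (integral\<^sup>L N (\<lambda>\<omega>. cos (S \<omega>))) + \<i> * complex_of_real (integral\<^sup>L N (\<lambda>\<omega>. sin (S \<omega>))) = chf N S"
  proof -
    have "chf N S = integral\<^sup>L N (\<lambda>\<omega>. complex_of_real (cos (S \<omega>)) + \<i> * complex_of_real (sin (S \<omega>)))"
      unfolding chf_def by (intro Bochner_Integration.integral_cong refl) (simp add: iexp_cos_sin[of "S _"])
    also have "\<dots> = complex_of_real (integral\<^sup>L N (\<lambda>\<omega>. cos (S \<omega>))) + \<i> * complex_of_real (integral\<^sup>L N (\<lambda>\<omega>. sin (S \<omega>)))"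
      using ic2 is2 by simp
    finally show ?thesis by simp
  qed
  finally show ?thesis .
qed

definition fchar :: "'a measure \<Rightarrow> ('i \<Rightarrow> 'a \<Rightarrow> real) \<Rightarrow> 'i set \<Rightarrow> bool" where
  "fchar N Z I \<longleftrightarrow> (\<forall>t. chf N (\<lambda>\<omega>. \<Sum>i\<in>I. t i * Z i \<omega>) = (\<Prod>i\<in>I. chf N (\<lambda>\<omega>. t i * Z i \<omega>)))"

lemma chf_zero: "prob_space N \<Longrightarrow> chf N (\<lambda>\<omega>. 0 * W \<omega>) = 1"
  by (simp add: chf_def prob_space.prob_space)

lemma chf_single:
  fixes Z :: "'i \<Rightarrow> 'a \<Rightarrow> real"
  assumes "finite I" "i \<in> I"
  shows "(\<lambda>\<omega>. \<Sum>j\<in>I. (if j = i then a else 0) * Z j \<omega>) = (\<lambda>\<omega>. a * Z i \<omega>)"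
proof (intro ext)
  fix \<omega>
  have "(\<Sum>j\<in>I. (if j = i then a else 0) * Z j \<omega>) = (\<Sum>j\<in>I. if j = i then a * Z i \<omega> else 0)"
    by (intro sum.cong) auto
  then show "(\<Sum>j\<in>I. (if j = i then a else 0) * Z j \<omega>) = a * Z i \<omega>" using assms by simp
qed

lemma prod_formula:
  assumes "finite I"
  shows "prob_space N \<Longrightarrow> (\<And>i. i \<in> I \<Longrightarrow> Z i \<in> borel_measurable N) \<Longrightarrow> fchar N Z I \<Longrightarrow>
    (\<And>i. i \<in> I \<Longrightarrow> B i \<in> sets borel) \<Longrightarrow>
    measure N {\<omega>\<in>space N. \<forall>i\<in>I. Z i \<omega> \<in> B i} = (\<Prod>i\<in>I. measure N {\<omega>\<in>space N. Z i \<omega> \<in> B i})"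
  using assms
proof (induction I arbitrary: N rule: finite_induct)
  case empty
  then show ?case by (simp add: prob_space.prob_space)
next
  case (insert y I N)
  note N = insert.prems(1)
  interpret prob_space N by fact
  have Zm[measurable]: "Z i \<in> borel_measurable N" if "i \<in> insert y I" for i using insert.prems(2) that by auto
  have Bm[measurable]: "B i \<in> sets borel" if "i \<in> insert y I" for i using insert.prems(4) that by auto
  have Zy[measurable]: "Z y \<in> borel_measurable N" by simp
  have By[measurable]: "B y \<in> sets borel" by simp
  have St[measurable]: "(\<lambda>\<omega>. \<Sum>i\<in>I. t i * Z i \<omega>) \<in> borel_measurable N" for t
    by (intro borel_measurable_sum borel_measurable_times) auto
  have fI: "fchar N Z I"
    unfolding fchar_def
  proof
    fix t :: "_ \<Rightarrow> real"
    let ?t = "t(y := 0)"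
    have "chf N (\<lambda>\<omega>. \<Sum>i\<in>insert y I. ?t i * Z i \<omega>) = (\<Prod>i\<in>insert y I. chf N (\<lambda>\<omega>. ?t i * Z i \<omega>))"
      using insert.prems(3) unfolding fchar_def by blast
    moreover have "(\<lambda>\<omega>. \<Sum>i\<in>insert y I. ?t i * Z i \<omega>) = (\<lambda>\<omega>. \<Sum>i\<in>I. t i * Z i \<omega>)"
      using insert.hyps by (intro ext) (auto intro!: sum.cong)
    moreover have "(\<Prod>i\<in>insert y I. chf N (\<lambda>\<omega>. ?t i * Z i \<omega>)) = (\<Prod>i\<in>I. chf N (\<lambda>\<omega>. t i * Z i \<omega>))"
      using insert.hyps chf_zero[OF N, of "Z y"] by (auto intro!: prod.cong)
    ultimately show "chf N (\<lambda>\<omega>. \<Sum>i\<in>I. t i * Z i \<omega>) = (\<Prod>i\<in>I. chf N (\<lambda>\<omega>. t i * Z i \<omega>))" by simp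
  qed
  have Fgen: "chf N (\<lambda>\<omega>. (\<Sum>i\<in>I. t i * Z i \<omega>) + u * Z y \<omega>) = chf N (\<lambda>\<omega>. \<Sum>i\<in>I. t i * Z i \<omega>) * chf N (\<lambda>\<omega>. u * Z y \<omega>)" for t u
  proof -
    let ?t = "t(y := u)"
    have "chf N (\<lambda>\<omega>. \<Sum>i\<in>insert y I. ?t i * Z i \<omega>) = (\<Prod>i\<in>insert y I. chf N (\<lambda>\<omega>. ?t i * Z i \<omega>))"
      using insert.prems(3) unfolding fchar_def by blast
    moreover have "(\<lambda>\<omega>. \<Sum>i\<in>insert y I. ?t i * Z i \<omega>) = (\<lambda>\<omega>. (\<Sum>i\<in>I. t i * Z i \<omega>) + u * Z y \<omega>)"
      using insert.hyps by (intro ext) (auto intro!: sum.cong)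
    moreover have "(\<Prod>i\<in>insert y I. chf N (\<lambda>\<omega>. ?t i * Z i \<omega>)) = chf N (\<lambda>\<omega>. u * Z y \<omega>) * (\<Prod>i\<in>I. chf N (\<lambda>\<omega>. t i * Z i \<omega>))"
      using insert.hyps by (auto intro!: prod.cong)
    ultimately show ?thesis using fI unfolding fchar_def by (simp add: mult.commute)
  qed
  have KK: "integral\<^sup>L N (\<lambda>\<omega>. iexp (\<Sum>i\<in>I. t i * Z i \<omega>) * indicator (B y) (Z y \<omega>))
      = chf N (\<lambda>\<omega>. \<Sum>i\<in>I. t i * Z i \<omega>) * measure N {\<omega>\<in>space N. Z y \<omega> \<in> B y}" for t
  proof (rule K[OF N St Zy])
    fix u
    show "chf N (\<lambda>\<omega>. (\<Sum>i\<in>I. t i * Z i \<omega>) + u * Z y \<omega>) = chf N (\<lambda>\<omega>. \<Sum>i\<in>I. t i * Z i \<omega>) * chf N (\<lambda>\<omega>. u * Z y \<omega>)"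
      by (rule Fgen)
    have e: "(\<lambda>\<omega>. \<Sum>i\<in>I. (- t i) * Z i \<omega>) = (\<lambda>\<omega>. - (\<Sum>i\<in>I. t i * Z i \<omega>))"
      by (simp add: sum_negf)
    have e2: "(\<lambda>\<omega>. (\<Sum>i\<in>I. (- t i) * Z i \<omega>) + u * Z y \<omega>) = (\<lambda>\<omega>. - (\<Sum>i\<in>I. t i * Z i \<omega>) + u * Z y \<omega>)"
      by (simp add: sum_negf)
    show "chf N (\<lambda>\<omega>. - (\<Sum>i\<in>I. t i * Z i \<omega>) + u * Z y \<omega>) = chf N (\<lambda>\<omega>. - (\<Sum>i\<in>I. t i * Z i \<omega>)) * chf N (\<lambda>\<omega>. u * Z y \<omega>)"
      using Fgen[of "\<lambda>i. - t i" u] unfolding e e2 .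
  qed simp
  define P where "P = measure N {\<omega>\<in>space N. Z y \<omega> \<in> B y}"
  define E where "E = {\<omega>\<in>space N. \<forall>i\<in>I. Z i \<omega> \<in> B i}"
  have Em[measurable]: "E \<in> sets N" unfolding E_def
    using insert.hyps by measurable
  have Ey[measurable]: "{\<omega>\<in>space N. Z y \<omega> \<in> B y} \<in> sets N" by measurable
  have split: "{\<omega>\<in>space N. \<forall>i\<in>insert y I. Z i \<omega> \<in> B i} = E \<inter> {\<omega>\<in>space N. Z y \<omega> \<in> B y}"
    unfolding E_def by auto
  have rhs: "(\<Prod>i\<in>insert y I. measure N {\<omega>\<in>space N. Z i \<omega> \<in> B i}) = P * (\<Prod>i\<in>I. measure N {\<omega>\<in>space N. Z i \<omega> \<in> B i})"
    using insert.hyps by (simp add: P_def)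
  show ?case
  proof (cases "P = 0")
    case True
    have "measure N (E \<inter> {\<omega>\<in>space N. Z y \<omega> \<in> B y}) \<le> P"
      unfolding P_def by (intro finite_measure_mono) auto
    then have "measure N (E \<inter> {\<omega>\<in>space N. Z y \<omega> \<in> B y}) = 0" using True by (simp add: measure_nonneg antisym)
    then show ?thesis unfolding split rhs True by simp
  next
    case False
    then have Ppos: "0 < P" unfolding P_def using measure_nonneg[of N] by (simp add: less_le)
    define g where "g = (\<lambda>\<omega>. indicator (B y) (Z y \<omega>) / P)"
    have gm[measurable]: "g \<in> borel_measurable N" unfolding g_def by measurable
    have gpos: "\<And>\<omega>. \<omega> \<in> space N \<Longrightarrow> 0 \<le> g \<omega>" using Ppos by (simp add: g_def)
    have iind: "integrable N (\<lambda>\<omega>. indicator (B y) (Z y \<omega>) :: real)"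
      by (intro integrable_const_bound[where B=1]) (auto intro!: AE_I2 simp: indicator_def)
    have ig: "integrable N g" unfolding g_def using iind by simp
    have intind: "integral\<^sup>L N (\<lambda>\<omega>. indicator (B y) (Z y \<omega>) :: real) = P"
    proof -
      have "integral\<^sup>L N (\<lambda>\<omega>. indicator (B y) (Z y \<omega>) :: real) = integral\<^sup>L N (indicator {\<omega>\<in>space N. Z y \<omega> \<in> B y})"
        by (intro Bochner_Integration.integral_cong) (auto simp: indicator_def)
      then show ?thesis by (simp add: P_def)
    qed
    have g1: "integral\<^sup>L N g = 1" unfolding g_def using Ppos intind by simp
    define N' where "N' = density N (\<lambda>\<omega>. ennreal (g \<omega>))"
    have N': "prob_space N'" unfolding N'_def by (rule dens_prob[OF N gm gpos ig g1])
    have sp: "space N' = space N" unfolding N'_def by simp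
    have Zm': "Z i \<in> borel_measurable N'" if "i \<in> I" for i unfolding N'_def using that by simp
    have CC: "chf N' (\<lambda>\<omega>. \<Sum>i\<in>I. t i * Z i \<omega>) = chf N (\<lambda>\<omega>. \<Sum>i\<in>I. t i * Z i \<omega>)" for t
    proof -
      have "chf N' (\<lambda>\<omega>. \<Sum>i\<in>I. t i * Z i \<omega>) = integral\<^sup>L N (\<lambda>\<omega>. g \<omega> *\<^sub>R iexp (\<Sum>i\<in>I. t i * Z i \<omega>))"
        unfolding chf_def N'_def using gpos by (intro integral_density) (auto intro!: AE_I2)
      also have "\<dots> = integral\<^sup>L N (\<lambda>\<omega>. complex_of_real (1 / P) * (iexp (\<Sum>i\<in>I. t i * Z i \<omega>) * indicator (B y) (Z y \<omega>)))"
        by (intro Bochner_Integration.integral_cong) (auto simp: g_def scaleR_conv_of_real indicator_def)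
      also have "\<dots> = complex_of_real (1 / P) * integral\<^sup>L N (\<lambda>\<omega>. iexp (\<Sum>i\<in>I. t i * Z i \<omega>) * indicator (B y) (Z y \<omega>))"
        by (rule integral_mult_right_zero)
      also have "\<dots> = complex_of_real (1 / P) * (chf N (\<lambda>\<omega>. \<Sum>i\<in>I. t i * Z i \<omega>) * complex_of_real P)"
        by (simp only: KK P_def)
      also have "\<dots> = chf N (\<lambda>\<omega>. \<Sum>i\<in>I. t i * Z i \<omega>)"
        using Ppos by (simp flip: of_real_mult)
      finally show ?thesis .
    qed
    have CS: "chf N' (\<lambda>\<omega>. a * Z i \<omega>) = chf N (\<lambda>\<omega>. a * Z i \<omega>)" if "i \<in> I" for a i
      using CC[of "\<lambda>j. if j = i then a else 0"] unfolding chf_single[OF insert.hyps(1) that] .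
    have fI': "fchar N' Z I"
      unfolding fchar_def using fI CC CS unfolding fchar_def by simp
    have IH: "measure N' {\<omega>\<in>space N'. \<forall>i\<in>I. Z i \<omega> \<in> B i} = (\<Prod>i\<in>I. measure N' {\<omega>\<in>space N'. Z i \<omega> \<in> B i})"
      by (rule insert.IH[OF N' Zm' fI']) (use insert.prems(4) in auto)
    have marg: "measure N' {\<omega>\<in>space N'. Z i \<omega> \<in> B i} = measure N {\<omega>\<in>space N. Z i \<omega> \<in> B i}" if "i \<in> I" for i
      by (rule uniq1[OF N' N Zm'[OF that] Zm]) (use CS[OF that] that insert.prems(4) in \<open>auto simp: chf_def\<close>)
    have mE: "measure N' E = measure N (E \<inter> {\<omega>\<in>space N. Z y \<omega> \<in> B y}) / P"
    proof -
      have "measure N' E = integral\<^sup>L N (\<lambda>\<omega>. g \<omega> * indicator E \<omega>)"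
        unfolding N'_def by (rule dens_measure[OF N gm gpos ig Em])
      also have "\<dots> = integral\<^sup>L N (\<lambda>\<omega>. indicator (E \<inter> {\<omega>\<in>space N. Z y \<omega> \<in> B y}) \<omega> / P)"
        by (intro Bochner_Integration.integral_cong) (auto simp: g_def indicator_def)
      also have "\<dots> = measure N (E \<inter> {\<omega>\<in>space N. Z y \<omega> \<in> B y}) / P"
        by simp
      finally show ?thesis .
    qed
    have "measure N (E \<inter> {\<omega>\<in>space N. Z y \<omega> \<in> B y}) = P * measure N' E"
      using mE Ppos by simp
    also have "measure N' E = (\<Prod>i\<in>I. measure N {\<omega>\<in>space N. Z i \<omega> \<in> B i})"
      using IH marg unfolding E_def sp by simp
    finally show ?thesis unfolding split rhs .
  qed
qed

lemma indep_from_fchar: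
  assumes N: "prob_space N" and I: "finite I" and Zm: "\<And>i. i \<in> I \<Longrightarrow> Z i \<in> borel_measurable N"
    and fc: "fchar N Z I"
  shows "prob_space.indep_vars N (\<lambda>_. borel) Z I"
proof -
  interpret prob_space N by fact
  show ?thesis
    unfolding indep_vars_def2 indep_sets_def
  proof (intro conjI ballI allI impI)
    fix i assume "i \<in> I" then show "random_variable borel (Z i)" using Zm by simp
  next
    fix i assume "i \<in> I"
    then show "{Z i -` A \<inter> space N |A. A \<in> sets borel} \<subseteq> events"
      using Zm by (auto intro: measurable_sets)
  next
    fix J A assume J: "J \<subseteq> I" "J \<noteq> {}" "finite J"
      and A: "A \<in> (\<Pi> j\<in>J. {Z j -` A \<inter> space N |A. A \<in> sets borel})"
    have "\<forall>j\<in>J. \<exists>B. A j = Z j -` B \<inter> space N \<and> B \<in> sets borel" using A by auto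
    then obtain B where B: "\<And>j. j \<in> J \<Longrightarrow> A j = Z j -` B j \<inter> space N \<and> B j \<in> sets borel"
      by metis
    define B' where "B' = (\<lambda>i. if i \<in> J then B i else UNIV)"
    have B'm: "B' i \<in> sets borel" for i using B by (simp add: B'_def)
    have pf: "measure N {\<omega>\<in>space N. \<forall>i\<in>I. Z i \<omega> \<in> B' i} = (\<Prod>i\<in>I. measure N {\<omega>\<in>space N. Z i \<omega> \<in> B' i})"
      by (rule prod_formula[OF I N Zm fc B'm])
    have "(\<Inter>j\<in>J. A j) = {\<omega>\<in>space N. \<forall>i\<in>I. Z i \<omega> \<in> B' i}"
      using B J by (auto simp: B'_def)
    moreover have "(\<Prod>i\<in>I. measure N {\<omega>\<in>space N. Z i \<omega> \<in> B' i}) = (\<Prod>j\<in>J. measure N (A j))"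
    proof -
      have "(\<Prod>i\<in>I. measure N {\<omega>\<in>space N. Z i \<omega> \<in> B' i}) = (\<Prod>i\<in>J. measure N {\<omega>\<in>space N. Z i \<omega> \<in> B' i})"
        using J I by (intro prod.mono_neutral_right) (auto simp: B'_def prob_space)
      also have "\<dots> = (\<Prod>j\<in>J. measure N (A j))"
        using B by (intro prod.cong) (auto simp: B'_def vimage_def Int_def conj_commute)
      finally show ?thesis .
    qed
    ultimately show "prob (\<Inter>j\<in>J. A j) = (\<Prod>j\<in>J. prob (A j))" using pf by simp
  qed
qed

lemma chf_gauss:
  assumes N: "prob_space N" and g: "centered_gaussian_rv N W v"
  shows "chf N W = complex_of_real (exp (- v / 2))"
proof -
  interpret prob_space N by fact
  have Wm[measurable]: "W \<in> borel_measurable N" and v0: "0 \<le> v" using g by (auto simp: centered_gaussian_rv_def)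
  show ?thesis
  proof (cases "v = 0")
    case True
    then have ae: "AE \<omega> in N. W \<omega> = 0" using g by (simp add: centered_gaussian_rv_def)
    have "chf N W = integral\<^sup>L N (\<lambda>\<omega>. iexp 0)"
      unfolding chf_def using ae by (intro integral_cong_AE) auto
    then show ?thesis using True by (simp add: prob_space)
  next
    case False
    then have vpos: "0 < v" using v0 by simp
    define s where "s = sqrt v"
    have spos: "0 < s" using vpos by (simp add: s_def)
    have D: "distributed N lborel W (normal_density 0 s)"
      using g False by (simp add: centered_gaussian_rv_def s_def)
    then have D': "distributed N lborel (\<lambda>x. (W x - 0) / s) std_normal_density"
      using normal_standard_normal_convert[OF spos] by simp
    define W' where "W' = (\<lambda>x. W x / s)"
    have D'': "distr N lborel W' = std_normal_distribution"
      using D' unfolding distributed_def W'_def by simp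
    have W'm: "W' \<in> N \<rightarrow>\<^sub>M lborel" unfolding W'_def by simp
    have "chf N W = integral\<^sup>L N (\<lambda>\<omega>. iexp (s * W' \<omega>))"
      unfolding chf_def W'_def using spos by simp
    also have "\<dots> = integral\<^sup>L (distr N lborel W') (\<lambda>x. iexp (s * x))"
      by (rule integral_distr[symmetric, OF W'm]) simp
    also have "\<dots> = char std_normal_distribution s"
      unfolding D'' char_def ..
    also have "\<dots> = complex_of_real (exp (- v / 2))"
      using vpos by (simp add: char_std_normal_distribution s_def)
    finally show ?thesis .
  qed
qed

lemma gauss_fchar:
  fixes Z :: "'i \<Rightarrow> 'a \<Rightarrow> real"
  assumes N: "prob_space N" and I: "finite I"
    and G: "\<And>t. centered_gaussian_rv N (\<lambda>\<omega>. \<Sum>i\<in>I. t i * Z i \<omega>) (\<Sum>i\<in>I. (t i)^2 * w i)"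
  shows "fchar N Z I"
  unfolding fchar_def
proof
  fix t :: "'i \<Rightarrow> real"
  have single: "chf N (\<lambda>\<omega>. t i * Z i \<omega>) = complex_of_real (exp (- ((t i)^2 * w i) / 2))" if "i \<in> I" for i
  proof -
    have "(\<Sum>j\<in>I. (if j = i then t i else 0)^2 * w j) = (\<Sum>j\<in>I. if j = i then (t i)^2 * w i else 0)"
      by (intro sum.cong) auto
    also have "\<dots> = (t i)^2 * w i" using I that by simp
    finally show ?thesis
      using chf_gauss[OF N G[of "\<lambda>j. if j = i then t i else 0"]] unfolding chf_single[OF I that] by simp
  qed
  have "chf N (\<lambda>\<omega>. \<Sum>i\<in>I. t i * Z i \<omega>) = complex_of_real (exp (- (\<Sum>i\<in>I. (t i)^2 * w i) / 2))"
    by (rule chf_gauss[OF N G])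
  also have "\<dots> = complex_of_real (\<Prod>i\<in>I. exp (- ((t i)^2 * w i) / 2))"
    using I by (simp add: exp_sum[symmetric] sum_divide_distrib sum_negf)
  also have "\<dots> = (\<Prod>i\<in>I. chf N (\<lambda>\<omega>. t i * Z i \<omega>))"
    using single by simp
  finally show "chf N (\<lambda>\<omega>. \<Sum>i\<in>I. t i * Z i \<omega>) = (\<Prod>i\<in>I. chf N (\<lambda>\<omega>. t i * Z i \<omega>))" .
qed

lemma bm_lin:
  assumes G: "centered_gaussian_process M B K" and J: "finite J"
  shows "centered_gaussian_rv M (\<lambda>\<omega>. \<Sum>j\<in>J. a j * B (p j) \<omega>) (\<Sum>j\<in>J. \<Sum>j'\<in>J. a j * a j' * K (p j) (p j'))"
proof -
  obtain h where h: "bij_betw h {0..<card J} J" using ex_bij_betw_nat_finite[OF J] by blast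
  have h': "bij_betw h {..<card J} J" using h by (simp add: lessThan_atLeast0)
  have "centered_gaussian_rv M (\<lambda>\<omega>. \<Sum>i<card J. (a \<circ> h) i * B ((p \<circ> h) i) \<omega>)
          (\<Sum>i<card J. \<Sum>i'<card J. (a \<circ> h) i * (a \<circ> h) i' * K ((p \<circ> h) i) ((p \<circ> h) i'))"
    using G unfolding centered_gaussian_process_def by blast
  moreover have "(\<lambda>\<omega>. \<Sum>i<card J. (a \<circ> h) i * B ((p \<circ> h) i) \<omega>) = (\<lambda>\<omega>. \<Sum>j\<in>J. a j * B (p j) \<omega>)"
  proof
    fix \<omega>
    show "(\<Sum>i<card J. (a \<circ> h) i * B ((p \<circ> h) i) \<omega>) = (\<Sum>j\<in>J. a j * B (p j) \<omega>)"
      using sum.reindex_bij_betw[OF h, of "\<lambda>j. a j * B (p j) \<omega>"] by (simp add: lessThan_atLeast0)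
  qed
  moreover have "(\<Sum>i<card J. \<Sum>i'<card J. (a \<circ> h) i * (a \<circ> h) i' * K ((p \<circ> h) i) ((p \<circ> h) i'))
       = (\<Sum>j\<in>J. \<Sum>j'\<in>J. a j * a j' * K (p j) (p j'))"
  proof -
    have "(\<Sum>i<card J. \<Sum>i'<card J. (a \<circ> h) i * (a \<circ> h) i' * K ((p \<circ> h) i) ((p \<circ> h) i'))
        = (\<Sum>i<card J. \<Sum>j'\<in>J. a (h i) * a j' * K (p (h i)) (p j'))"
      by (intro sum.cong refl, simp only: comp_def, rule sum.reindex_bij_betw[OF h', of "\<lambda>j'. a (h _) * a j' * K (p (h _)) (p j')"])
    also have "\<dots> = (\<Sum>j\<in>J. \<Sum>j'\<in>J. a j * a j' * K (p j) (p j'))"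
      using sum.reindex_bij_betw[OF h, of "\<lambda>j. \<Sum>j'\<in>J. a j * a j' * K (p j) (p j')"] by (simp add: lessThan_atLeast0)
    finally show ?thesis .
  qed
  ultimately show ?thesis by simp
qed

definition kk :: "real^2 \<Rightarrow> real^2 \<Rightarrow> real" where
  "kk X Y = (radial_dist 0 X + radial_dist 0 Y - radial_dist X Y) / 2"

lemma rd0: "radial_dist 0 X = norm X"
  unfolding radial_dist_def by (auto intro: exI[of _ 0])

lemma kk_formula: "kk X Y = (if sgn X = sgn Y then min (norm X) (norm Y) else 0)"
proof (cases "X = 0")
  case True
  then show ?thesis by (auto simp: kk_def rd0 radial_dist_def intro: exI[of _ 0])
next
  case X: False
  show ?thesis
  proof (cases "Y = 0")
    case True
    then show ?thesis using X by (auto simp: kk_def rd0 radial_dist_def)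
  next
    case Y: False
    show ?thesis
    proof (cases "sgn X = sgn Y")
      case True
      have "X = (norm X / norm Y) *\<^sub>R Y"
      proof -
        have "X = norm X *\<^sub>R sgn X" using X by (simp add: sgn_div_norm)
        also have "\<dots> = norm X *\<^sub>R sgn Y" by (simp add: True)
        also have "\<dots> = (norm X / norm Y) *\<^sub>R Y" using Y by (simp add: sgn_div_norm divide_inverse)
        finally show ?thesis .
      qed
      then have d: "radial_dist X Y = norm ((norm X / norm Y - 1) *\<^sub>R Y)"
        unfolding radial_dist_def by (metis scaleR_diff_left scaleR_one)
      have "norm ((norm X / norm Y - 1) *\<^sub>R Y) = \<bar>norm X - norm Y\<bar>"
        using Y by (simp add: abs_minus_commute divide_simps)
      then show ?thesis using True d by (auto simp: kk_def rd0 min_def)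
    next
      case False
      have "radial_dist X Y = norm X + norm Y"
      proof (cases "\<exists>a. X = a *\<^sub>R Y")
        case True
        then obtain a where a: "X = a *\<^sub>R Y" by blast
        have "a < 0"
        proof (rule ccontr)
          assume "\<not> a < 0"
          then have "a > 0" using a X by (cases "a = 0") auto
          then have "sgn X = sgn Y" using a by (simp add: sgn_scaleR)
          then show False using False by simp
        qed
        then have "norm (X - Y) = norm X + norm Y"
        proof -
          assume an: "a < 0"
          have "X - Y = (a - 1) *\<^sub>R Y" using a by (simp add: algebra_simps)
          then have "norm (X - Y) = (1 - a) * norm Y" using an by simp
          moreover have "norm X = (- a) * norm Y" using a an by simp
          ultimately show ?thesis by (simp add: algebra_simps)
        qed
        then show ?thesis using True unfolding radial_dist_def by simp
      next
        case False
        then show ?thesis unfolding radial_dist_def by simp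
      qed
      then show ?thesis using False by (simp add: kk_def rd0)
    qed
  qed
qed

definition ee :: "(nat \<Rightarrow> bool) \<Rightarrow> nat \<Rightarrow> real" where
  "ee st j = (if st j then 0 else 1)"

definition Kz :: "(nat \<Rightarrow> real^2) \<Rightarrow> (nat \<Rightarrow> bool) \<Rightarrow> nat \<Rightarrow> nat \<Rightarrow> real" where
  "Kz x st j j' = kk (x j) (x j') - ee st j' * kk (x j) (x (j' - 1)) - ee st j * kk (x (j - 1)) (x j')
     + ee st j * ee st j' * kk (x (j - 1)) (x (j' - 1))"

lemma zlin:
  assumes G: "centered_gaussian_process M B kk" and J: "finite J"
  shows "centered_gaussian_rv M (\<lambda>\<omega>. \<Sum>j\<in>J. t j * (B (x j) \<omega> - ee st j * B (x (j - 1)) \<omega>))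
           (\<Sum>j\<in>J. \<Sum>j'\<in>J. t j * t j' * Kz x st j j')"
proof -
  define a where "a = (\<lambda>(j::nat, b::bool). if b then t j else - t j * ee st j)"
  define p where "p = (\<lambda>(j::nat, b::bool). if b then x j else x (j - 1))"
  have JU: "finite (J \<times> (UNIV :: bool set))" using J by simp
  have g: "centered_gaussian_rv M (\<lambda>\<omega>. \<Sum>u\<in>J \<times> UNIV. a u * B (p u) \<omega>) (\<Sum>u\<in>J \<times> UNIV. \<Sum>v\<in>J \<times> UNIV. a u * a v * kk (p u) (p v))"
    by (rule bm_lin[OF G JU])
  have e1: "(\<lambda>\<omega>. \<Sum>u\<in>J \<times> UNIV. a u * B (p u) \<omega>) = (\<lambda>\<omega>. \<Sum>j\<in>J. t j * (B (x j) \<omega> - ee st j * B (x (j - 1)) \<omega>))"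
  proof
    fix \<omega>
    have "(\<Sum>u\<in>J \<times> UNIV. a u * B (p u) \<omega>) = (\<Sum>j\<in>J. \<Sum>b\<in>UNIV. a (j, b) * B (p (j, b)) \<omega>)"
      by (subst sum.cartesian_product) simp
    also have "\<dots> = (\<Sum>j\<in>J. t j * (B (x j) \<omega> - ee st j * B (x (j - 1)) \<omega>))"
      by (intro sum.cong refl) (simp add: UNIV_bool a_def p_def algebra_simps)
    finally show "(\<Sum>u\<in>J \<times> UNIV. a u * B (p u) \<omega>) = (\<Sum>j\<in>J. t j * (B (x j) \<omega> - ee st j * B (x (j - 1)) \<omega>))" .
  qed
  have e2: "(\<Sum>u\<in>J \<times> UNIV. \<Sum>v\<in>J \<times> UNIV. a u * a v * kk (p u) (p v)) = (\<Sum>j\<in>J. \<Sum>j'\<in>J. t j * t j' * Kz x st j j')"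
  proof -
    have "(\<Sum>u\<in>J \<times> UNIV. \<Sum>v\<in>J \<times> UNIV. a u * a v * kk (p u) (p v))
        = (\<Sum>j\<in>J. \<Sum>b\<in>UNIV. \<Sum>v\<in>J \<times> UNIV. a (j, b) * a v * kk (p (j, b)) (p v))"
      by (subst sum.cartesian_product) simp
    also have "\<dots> = (\<Sum>j\<in>J. \<Sum>b\<in>UNIV. \<Sum>j'\<in>J. \<Sum>b'\<in>UNIV. a (j, b) * a (j', b') * kk (p (j, b)) (p (j', b')))"
      by (intro sum.cong refl) (subst sum.cartesian_product, simp)
    also have "\<dots> = (\<Sum>j\<in>J. \<Sum>j'\<in>J. \<Sum>b\<in>UNIV. \<Sum>b'\<in>UNIV. a (j, b) * a (j', b') * kk (p (j, b)) (p (j', b')))"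
      by (intro sum.cong refl) (rule sum.swap)
    also have "\<dots> = (\<Sum>j\<in>J. \<Sum>j'\<in>J. t j * t j' * Kz x st j j')"
      by (intro sum.cong refl) (simp add: UNIV_bool a_def p_def Kz_def algebra_simps)
    finally show ?thesis .
  qed
  show ?thesis using g unfolding e1 e2 .
qed

lemma kk_sym: "kk X Y = kk Y X"
  by (simp add: kk_formula min.commute eq_commute)

lemma Kz_sym: "Kz x st j j' = Kz x st j' j"
  by (simp add: Kz_def kk_sym algebra_simps)

locale seqprops =
  fixes x :: "nat \<Rightarrow> real^2" and st :: "nat \<Rightarrow> bool" and n :: nat
  assumes st1: "st 1"
    and stdef: "\<And>j. 1 < j \<Longrightarrow> j \<le> n \<Longrightarrow> (st j \<longleftrightarrow> sgn (x (j - 1)) \<noteq> sgn (x j))"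
    and mono: "\<And>i j. 1 \<le> i \<Longrightarrow> i \<le> j \<Longrightarrow> j \<le> n \<Longrightarrow> sgn (x i) = sgn (x j) \<Longrightarrow> norm (x i) \<le> norm (x j)"
    and contig: "\<And>i j. 1 \<le> i \<Longrightarrow> i < j \<Longrightarrow> j \<le> n \<Longrightarrow> sgn (x i) = sgn (x j) \<Longrightarrow> sgn (x (j - 1)) = sgn (x j)"
begin

lemma C:
  assumes "1 \<le> i" "i < j'" "j' \<le> n"
  shows "kk (x i) (x j') - ee st j' * kk (x i) (x (j' - 1)) = 0"
proof (cases "st j'")
  case True
  have "sgn (x i) \<noteq> sgn (x j')"
  proof
    assume "sgn (x i) = sgn (x j')"
    then have "sgn (x (j' - 1)) = sgn (x j')" using contig assms by blast
    then show False using stdef[of j'] assms True by auto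
  qed
  then show ?thesis using True by (simp add: ee_def kk_formula)
next
  case False
  then have j1: "1 < j'" using st1 assms by (cases "j' = 1") auto
  have s: "sgn (x (j' - 1)) = sgn (x j')" using stdef[OF j1 assms(3)] False by simp
  show ?thesis
  proof (cases "sgn (x i) = sgn (x j')")
    case True
    have "norm (x i) \<le> norm (x (j' - 1))" using mono[of i "j' - 1"] assms True s by simp
    moreover have "norm (x (j' - 1)) \<le> norm (x j')" using mono[of "j' - 1" j'] assms s j1 by simp
    ultimately show ?thesis using True s False by (simp add: ee_def kk_formula min_def)
  next
    case F: False
    then show ?thesis using s False by (simp add: ee_def kk_formula)
  qed
qed

lemma Kz_lt:
  assumes "1 \<le> j" "j < j'" "j' \<le> n"
  shows "Kz x st j j' = 0"
proof -
  have "Kz x st j j' = (kk (x j) (x j') - ee st j' * kk (x j) (x (j' - 1)))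
      - ee st j * (kk (x (j - 1)) (x j') - ee st j' * kk (x (j - 1)) (x (j' - 1)))"
    by (simp add: Kz_def algebra_simps)
  also have "\<dots> = 0"
  proof (cases "st j")
    case True
    then show ?thesis using C[OF assms] by (simp add: ee_def)
  next
    case False
    then have "1 < j" using st1 assms by (cases "j = 1") auto
    then have "kk (x (j - 1)) (x j') - ee st j' * kk (x (j - 1)) (x (j' - 1)) = 0"
      using C[of "j - 1" j'] assms by simp
    then show ?thesis using C[OF assms] by simp
  qed
  finally show ?thesis .
qed

lemma Kz_off:
  assumes "j \<in> {1..n}" "j' \<in> {1..n}" "j \<noteq> j'"
  shows "Kz x st j j' = 0"
proof (cases "j < j'")
  case True then show ?thesis using Kz_lt assms by auto
next
  case False then have "j' < j" using assms by simp
  then show ?thesis using Kz_lt[of j' j] assms Kz_sym[of x st j j'] by auto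
qed

lemma diag_sum:
  "(\<Sum>j\<in>{1..n}. \<Sum>j'\<in>{1..n}. t j * t j' * Kz x st j j') = (\<Sum>j\<in>{1..n}. (t j)^2 * Kz x st j j)"
proof (intro sum.cong refl)
  fix j assume j: "j \<in> {1..n}"
  have "(\<Sum>j'\<in>{1..n}. t j * t j' * Kz x st j j') = (\<Sum>j'\<in>{1..n}. if j' = j then t j * t j * Kz x st j j else 0)"
    using Kz_off[OF j] by (intro sum.cong refl) auto
  also have "\<dots> = (t j)^2 * Kz x st j j" using j by (simp add: power2_eq_square)
  finally show "(\<Sum>j'\<in>{1..n}. t j * t j' * Kz x st j j') = (t j)^2 * Kz x st j j" .
qed

end

lemma kk_eq: "(\<lambda>X Y. (radial_dist 0 X + radial_dist 0 Y - radial_dist X Y) / 2) = kk"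
  by (intro ext) (simp add: kk_def)

lemma (in seqprops) Z_indep:
  assumes BM: "radial_brownian_motion M B"
  shows "prob_space.indep_vars M (\<lambda>_. borel) (\<lambda>j \<omega>. B (x j) \<omega> - ee st j * B (x (j - 1)) \<omega>) {1..n}"
proof -
  have G: "centered_gaussian_process M B kk" using BM unfolding radial_brownian_motion_def kk_eq by simp
  then have M: "prob_space M" and Bm: "\<And>X. B X \<in> borel_measurable M"
    unfolding centered_gaussian_process_def by auto
  have "fchar M (\<lambda>j \<omega>. B (x j) \<omega> - ee st j * B (x (j - 1)) \<omega>) {1..n}"
  proof (rule gauss_fchar[OF M, where w="\<lambda>j. Kz x st j j"])
    fix t
    show "centered_gaussian_rv M (\<lambda>\<omega>. \<Sum>i\<in>{1..n}. t i * (B (x i) \<omega> - ee st i * B (x (i - 1)) \<omega>))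
            (\<Sum>i\<in>{1..n}. (t i)\<^sup>2 * Kz x st i i)"
      using zlin[OF G, of "{1..n}" t x st] unfolding diag_sum by simp
  qed simp
  then show ?thesis
    by (intro indep_from_fchar[OF M]) (auto intro!: borel_measurable_diff borel_measurable_times Bm)
qed

lemma sum_last: "1 \<le> (q::nat) \<Longrightarrow> (\<Sum>i=1..q. f i) = (\<Sum>i=1..q-1. f i) + (f q :: nat)"
  by (cases q) (auto simp: sum.cl_ivl_Suc)

lemma blocks:
  "S \<subseteq> {1..n} \<Longrightarrow> 1 \<in> S \<Longrightarrow> \<exists>(q::nat) (ns::nat\<Rightarrow>nat). q \<ge> 1 \<and> (\<forall>l\<in>{1..q}. ns l > 0) \<and> (\<Sum>l=1..q. ns l) = (n::nat) \<and>
     (\<forall>l\<in>{1..q}. (\<Sum>i=1..l-1. ns i) + 1 \<in> S) \<and>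
     (\<forall>l\<in>{1..q}. \<forall>j. (\<Sum>i=1..l-1. ns i) + 1 < j \<and> j \<le> (\<Sum>i=1..l. ns i) \<longrightarrow> j \<notin> S)"
proof (induction n arbitrary: S)
  case 0
  then show ?case by auto
next
  case (Suc n)
  show ?case
  proof (cases "n = 0")
    case True
    then have "S = {1}" using Suc.prems by auto
    then show ?thesis using True by (intro exI[where x="1::nat"] exI[where x="\<lambda>_::nat. 1::nat"]) auto
  next
    case False
    define S' where "S' = S \<inter> {1..n}"
    have "S' \<subseteq> {1..n}" "1 \<in> S'" using Suc.prems False by (auto simp: S'_def)
    from Suc.IH[OF this] obtain q :: nat and ns :: "nat \<Rightarrow> nat" where q: "q \<ge> 1" and pos: "\<forall>l\<in>{1..q}. ns l > 0"
      and sm: "(\<Sum>l=1..q. ns l) = n"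
      and stt: "\<forall>l\<in>{1..q}. (\<Sum>i=1..l-1. ns i) + 1 \<in> S'"
      and ns: "\<forall>l\<in>{1..q}. \<forall>j. (\<Sum>i=1..l-1. ns i) + 1 < j \<and> j \<le> (\<Sum>i=1..l. ns i) \<longrightarrow> j \<notin> S'"
      by blast
    have mono_sum: "(\<Sum>i=1..l. ns i) \<le> n" if "l \<le> q" for l
    proof -
      have "(\<Sum>i=1..l. ns i) \<le> (\<Sum>i=1..q. ns i)" using that by (intro sum_mono2) auto
      then show ?thesis using sm by simp
    qed
    show ?thesis
    proof (cases "Suc n \<in> S")
      case True
      define ns' where "ns' = ns(Suc q := 1)"
      have eq: "(\<Sum>i=1..l. ns' i) = (\<Sum>i=1..l. ns i)" if "l \<le> q" for l
        using that by (intro sum.cong refl) (auto simp: ns'_def)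
      have smq: "(\<Sum>i=1..Suc q. ns' i) = Suc n"
        using eq[of q] sm by (simp add: ns'_def)
      show ?thesis
      proof (intro exI[of _ "Suc q"] exI[of _ ns'] conjI ballI allI impI)
        show "1 \<le> Suc q" by simp
      next
        fix l assume "l \<in> {1..Suc q}" then show "0 < ns' l" using pos by (auto simp: ns'_def)
      next
        show "(\<Sum>l=1..Suc q. ns' l) = Suc n" by (rule smq)
      next
        fix l assume l: "l \<in> {1..Suc q}"
        show "(\<Sum>i=1..l-1. ns' i) + 1 \<in> S"
        proof (cases "l = Suc q")
          case True then show ?thesis using eq[of q] sm \<open>Suc n \<in> S\<close> by simp
        next
          case False then show ?thesis using l stt eq[of "l - 1"] by (auto simp: S'_def)
        qed
      next
        fix l j assume l: "l \<in> {1..Suc q}" and j: "(\<Sum>i=1..l-1. ns' i) + 1 < j \<and> j \<le> (\<Sum>i=1..l. ns' i)"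
        show "j \<notin> S"
        proof (cases "l = Suc q")
          case True then show ?thesis using j eq[of q] sm smq by simp
        next
          case False
          then have lq: "l \<in> {1..q}" "l \<le> q" using l by auto
          then have "j \<notin> S'" using ns j eq[of l] eq[of "l - 1"] by auto
          moreover have "j \<le> n" using j eq[of l] mono_sum[of l] lq by simp
          ultimately show ?thesis using j by (auto simp: S'_def)
        qed
      qed
    next
      case nS: False
      define ns' where "ns' = ns(q := Suc (ns q))"
      have eq: "(\<Sum>i=1..l. ns' i) = (\<Sum>i=1..l. ns i)" if "l < q" for l
        using that by (intro sum.cong refl) (auto simp: ns'_def)
      have smq: "(\<Sum>i=1..q. ns' i) = Suc n"
      proof -
        have "(\<Sum>i=1..q. ns' i) = (\<Sum>i=1..q-1. ns' i) + ns' q"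
          using q by (rule sum_last)
        also have "\<dots> = (\<Sum>i=1..q-1. ns i) + Suc (ns q)"
          using eq[of "q - 1"] q by (simp add: ns'_def)
        also have "(\<Sum>i=1..q-1. ns i) + ns q = (\<Sum>i=1..q. ns i)"
          using q by (rule sum_last[symmetric])
        then have "(\<Sum>i=1..q-1. ns i) + Suc (ns q) = Suc n" using sm by simp
        finally show ?thesis .
      qed
      show ?thesis
      proof (intro exI[of _ q] exI[of _ ns'] conjI ballI allI impI)
        show "1 \<le> q" by fact
      next
        fix l assume "l \<in> {1..q}" then show "0 < ns' l" using pos by (auto simp: ns'_def)
      next
        show "(\<Sum>l=1..q. ns' l) = Suc n" by (rule smq)
      next
        fix l assume l: "l \<in> {1..q}"
        show "(\<Sum>i=1..l-1. ns' i) + 1 \<in> S"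
          using l stt eq[of "l - 1"] by (auto simp: S'_def)
      next
        fix l j assume l: "l \<in> {1..q}" and j: "(\<Sum>i=1..l-1. ns' i) + 1 < j \<and> j \<le> (\<Sum>i=1..l. ns' i)"
        have j1: "(\<Sum>i=1..l-1. ns i) + 1 < j" using j eq[of "l - 1"] l by auto
        show "j \<notin> S"
        proof (cases "l = q")
          case True
          show ?thesis
          proof (cases "j = Suc n")
            case True then show ?thesis using nS by simp
          next
            case False
            then have "j \<le> n" using j smq \<open>l = q\<close> by simp
            then have "j \<notin> S'" using ns l j1 \<open>l = q\<close> sm by auto
            then show ?thesis using \<open>j \<le> n\<close> j by (auto simp: S'_def)
          qed
        next
          case False
          then have lq: "l < q" using l by auto
          then have "j \<notin> S'" using ns l j1 j eq[of l] by auto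
          moreover have "j \<le> n" using j eq[of l] mono_sum[of l] lq by simp
          ultimately show ?thesis using j by (auto simp: S'_def)
        qed
      qed
    qed
  qed
qed

definition key :: "real^2 \<Rightarrow> real list" where
  "key X = [sgn X $ 1, sgn X $ 2, norm X]"

lemma sort_perm:
  fixes A :: "nat \<Rightarrow> real^2" and n :: nat
  shows "\<exists>\<sigma>. \<sigma> permutes {1..n} \<and> (\<forall>i j. 1 \<le> i \<and> i \<le> j \<and> j \<le> n \<longrightarrow> key (A (\<sigma> i)) \<le> key (A (\<sigma> j)))"
proof -
  define xs where "xs = sort_key (\<lambda>j. key (A j)) [1..<n+1]"
  define \<sigma> where "\<sigma> = (\<lambda>j. if j \<in> {1..n} then xs ! (j - 1) else j)"
  have len: "length xs = n" by (simp add: xs_def)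
  have dist: "distinct xs" by (simp add: xs_def)
  have set: "set xs = {1..n}" by (auto simp: xs_def)
  have srt: "sorted (map (\<lambda>j. key (A j)) xs)" by (simp add: xs_def)
  have inj: "inj_on \<sigma> {1..n}"
  proof (rule inj_onI)
    fix i j assume i: "i \<in> {1..n}" and j: "j \<in> {1..n}" and e: "\<sigma> i = \<sigma> j"
    then have "xs ! (i - 1) = xs ! (j - 1)" by (simp add: \<sigma>_def)
    then have "i - 1 = j - 1" using nth_eq_iff_index_eq[OF dist, of "i - 1" "j - 1"] i j len by auto
    then show "i = j" using i j by auto
  qed
  have img: "\<sigma> ` {1..n} \<subseteq> {1..n}"
  proof
    fix y assume "y \<in> \<sigma> ` {1..n}"
    then obtain i where i: "i \<in> {1..n}" "y = xs ! (i - 1)" by (auto simp: \<sigma>_def)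
    then have "y \<in> set xs" using len by auto
    then show "y \<in> {1..n}" using set by simp
  qed
  have bij: "bij_betw \<sigma> {1..n} {1..n}"
    unfolding bij_betw_def using inj endo_inj_surj[OF _ img inj] by simp
  have perm: "\<sigma> permutes {1..n}"
    by (rule bij_imp_permutes[OF bij]) (auto simp: \<sigma>_def)
  have "key (A (\<sigma> i)) \<le> key (A (\<sigma> j))" if "1 \<le> i" "i \<le> j" "j \<le> n" for i j
  proof -
    have "map (\<lambda>j. key (A j)) xs ! (i - 1) \<le> map (\<lambda>j. key (A j)) xs ! (j - 1)"
      using sorted_nth_mono[OF srt, of "i - 1" "j - 1"] that len by simp
    then show ?thesis using that len by (simp add: \<sigma>_def)
  qed
  then show ?thesis using perm by blast
qed

lemma key_lex:
  assumes "key X \<le> key Y" "key Y \<le> key Z" "sgn X = sgn Z"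
  shows "sgn Y = sgn Z"
proof -
  have "sgn Y $ 1 = sgn Z $ 1 \<and> sgn Y $ 2 = sgn Z $ 2"
    using assms by (auto simp: key_def less_eq_list_code less_list_code)
  then show ?thesis by (simp add: vec_eq_iff forall_2)
qed

lemma key_norm:
  assumes "key X \<le> key Y" "sgn X = sgn Y"
  shows "norm X \<le> norm Y"
  using assms by (auto simp: key_def less_eq_list_code less_list_code)

lemma seqprops_sorted:
  fixes x :: "nat \<Rightarrow> real^2"
  assumes srt: "\<And>i j. 1 \<le> i \<Longrightarrow> i \<le> j \<Longrightarrow> j \<le> n \<Longrightarrow> key (x i) \<le> key (x j)"
  shows "seqprops x (\<lambda>j. j = 1 \<or> sgn (x (j - 1)) \<noteq> sgn (x j)) n"
proof
  show "1 = 1 \<or> sgn (x (1 - 1)) \<noteq> sgn (x 1)" by simp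
next
  fix j :: nat assume "1 < j" "j \<le> n"
  then show "(j = 1 \<or> sgn (x (j - 1)) \<noteq> sgn (x j)) = (sgn (x (j - 1)) \<noteq> sgn (x j))" by simp
next
  fix i j :: nat assume "1 \<le> i" "i \<le> j" "j \<le> n" "sgn (x i) = sgn (x j)"
  then show "norm (x i) \<le> norm (x j)" using key_norm srt by blast
next
  fix i j :: nat assume a: "1 \<le> i" "i < j" "j \<le> n" "sgn (x i) = sgn (x j)"
  show "sgn (x (j - 1)) = sgn (x j)"
    using key_lex[OF srt[of i "j - 1"] srt[of "j - 1" j] a(4)] a by simp
qed

lemma tele:
  fixes B :: "real^2 \<Rightarrow> 'a \<Rightarrow> real"
  assumes st: "st s" and ns: "\<And>i. s < i \<Longrightarrow> i \<le> e \<Longrightarrow> \<not> st i" and sj: "s \<le> j" and je: "j \<le> e"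
  shows "(\<Sum>i=s..j. B (x i) \<omega> - ee st i * B (x (i - 1)) \<omega>) = B (x j) \<omega>"
proof -
  have "j \<le> e \<longrightarrow> (\<Sum>i=s..j. B (x i) \<omega> - ee st i * B (x (i - 1)) \<omega>) = B (x j) \<omega>"
    using sj
  proof (induction j rule: dec_induct)
    case base
    then show ?case using st by (simp add: ee_def)
  next
    case (step m)
    show ?case
    proof
      assume "Suc m \<le> e"
      then have "\<not> st (Suc m)" using ns step.hyps by simp
      then show "(\<Sum>i=s..Suc m. B (x i) \<omega> - ee st i * B (x (i - 1)) \<omega>) = B (x (Suc m)) \<omega>"
        using step \<open>Suc m \<le> e\<close> by (simp add: sum.cl_ivl_Suc ee_def)
    qed
  qed
  then show ?thesis using je by simp
qed

theorem proposition4p3: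
  fixes M :: "'a measure" and B :: "real^2 \<Rightarrow> 'a \<Rightarrow> real"
    and A :: "nat \<Rightarrow> real^2" and n :: nat
  assumes BM: "radial_brownian_motion M B"
    and n: "n \<ge> 1"
  shows "\<exists>(\<sigma>::nat \<Rightarrow> nat) (q::nat) (ns::nat \<Rightarrow> nat).
    \<sigma> permutes {1..n} \<and> q \<ge> 1 \<and> (\<forall>l\<in>{1..q}. ns l > 0) \<and> (\<Sum>l=1..q. ns l) = n \<and>
    (let N = (\<lambda>l. \<Sum>i=1..l. ns i) in
      prob_space.indep_vars M (\<lambda>l. \<Pi>\<^sub>M j\<in>{N (l - 1) + 1..N l}. (borel :: real measure))
        (\<lambda>l \<omega>. \<lambda>j\<in>{N (l - 1) + 1..N l}. B (A (\<sigma> j)) \<omega>) {1..q} \<and>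
      (\<forall>l\<in>{1..q}.
        prob_space.indep_vars M (\<lambda>_. (borel :: real measure))
          (\<lambda>j \<omega>. if j = N (l - 1) then B (A (\<sigma> (N (l - 1) + 1))) \<omega>
                  else B (A (\<sigma> (j + 1))) \<omega> - B (A (\<sigma> j)) \<omega>)
          {N (l - 1)..<N l}))"
proof -
  have Mp: "prob_space M" using BM unfolding radial_brownian_motion_def centered_gaussian_process_def by simp
  interpret prob_space M by fact
  obtain \<sigma> where perm: "\<sigma> permutes {1..n}"
    and srt: "\<And>i j. 1 \<le> i \<Longrightarrow> i \<le> j \<Longrightarrow> j \<le> n \<Longrightarrow> key (A (\<sigma> i)) \<le> key (A (\<sigma> j))"
    using sort_perm[of n A] by blast
  define x where "x = (\<lambda>j. A (\<sigma> j))"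
  define st where "st = (\<lambda>j. j = 1 \<or> sgn (x (j - 1)) \<noteq> sgn (x j))"
  have sp: "seqprops x st n" unfolding st_def by (rule seqprops_sorted) (use srt in \<open>simp add: x_def\<close>)
  define Z where "Z = (\<lambda>j \<omega>. B (x j) \<omega> - ee st j * B (x (j - 1)) \<omega>)"
  have Zind: "indep_vars (\<lambda>_. borel) Z {1..n}"
    unfolding Z_def by (rule seqprops.Z_indep[OF sp BM])
  define S where "S = {j\<in>{1..n}. st j}"
  have "S \<subseteq> {1..n}" "1 \<in> S" using n by (auto simp: S_def st_def)
  from blocks[OF this] obtain q :: nat and ns :: "nat \<Rightarrow> nat" where q: "q \<ge> 1"
    and pos: "\<forall>l\<in>{1..q}. ns l > 0" and sm: "(\<Sum>l=1..q. ns l) = n"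
    and stt: "\<forall>l\<in>{1..q}. (\<Sum>i=1..l-1. ns i) + 1 \<in> S"
    and nst: "\<forall>l\<in>{1..q}. \<forall>j. (\<Sum>i=1..l-1. ns i) + 1 < j \<and> j \<le> (\<Sum>i=1..l. ns i) \<longrightarrow> j \<notin> S"
    by blast
  define N where "N = (\<lambda>l. \<Sum>i=1..l. ns i)"
  have Nmono: "N l \<le> N l'" if "l \<le> l'" for l l' unfolding N_def using that by (intro sum_mono2) auto
  have Nq: "N q = n" using sm by (simp add: N_def)
  have Nle: "N l \<le> n" if "l \<le> q" for l using Nmono[OF that] Nq by simp
  have Nstep: "N l = N (l - 1) + ns l" if "l \<ge> 1" for l unfolding N_def using sum_last[OF that] .
  have Nlt: "N (l - 1) < N l" if "l \<in> {1..q}" for l using Nstep[of l] pos that by auto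
  have start: "st (N (l - 1) + 1)" if "l \<in> {1..q}" for l using stt that by (auto simp: S_def N_def)
  have inner: "\<not> st j" if "l \<in> {1..q}" "N (l - 1) + 1 < j" "j \<le> N l" for l j
  proof -
    have "j \<notin> S" using nst that by (auto simp: N_def)
    moreover have "j \<in> {1..n}" using that Nle[of l] by auto
    ultimately show ?thesis by (auto simp: S_def)
  qed
  have goal2: "indep_vars (\<lambda>_. borel)
          (\<lambda>j \<omega>. if j = N (l - 1) then B (A (\<sigma> (N (l - 1) + 1))) \<omega>
                  else B (A (\<sigma> (j + 1))) \<omega> - B (A (\<sigma> j)) \<omega>)
          {N (l - 1)..<N l}" if l: "l \<in> {1..q}" for l
  proof -
    have r: "indep_vars (\<lambda>j. PiM {Suc j} (\<lambda>_. borel)) (\<lambda>j \<omega>. restrict (\<lambda>i. Z i \<omega>) {Suc j}) {N (l - 1)..<N l}"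
      by (rule indep_vars_restrict[OF Zind]) (use Nle[of l] l in \<open>auto simp: disjoint_family_on_def\<close>)
    have c: "indep_vars (\<lambda>_. borel) (\<lambda>j \<omega>. (\<lambda>v. v (Suc j)) (restrict (\<lambda>i. Z i \<omega>) {Suc j})) {N (l - 1)..<N l}"
      by (rule indep_vars_compose2[OF r]) (rule measurable_component_singleton, simp)
    show ?thesis
    proof (rule iffD1[OF indep_vars_cong c])
      fix j assume j: "j \<in> {N (l - 1)..<N l}"
      show "(\<lambda>\<omega>. (\<lambda>v. v (Suc j)) (restrict (\<lambda>i. Z i \<omega>) {Suc j})) =
          (\<lambda>\<omega>. if j = N (l - 1) then B (A (\<sigma> (N (l - 1) + 1))) \<omega> else B (A (\<sigma> (j + 1))) \<omega> - B (A (\<sigma> j)) \<omega>)"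
      proof (cases "j = N (l - 1)")
        case True
        then show ?thesis using start[OF l] by (simp add: Z_def ee_def x_def)
      next
        case False
        then have "\<not> st (Suc j)" using inner[OF l, of "Suc j"] j by auto
        then show ?thesis using False by (simp add: Z_def ee_def x_def)
      qed
    qed auto
  qed
  have goal1: "indep_vars (\<lambda>l. \<Pi>\<^sub>M j\<in>{N (l - 1) + 1..N l}. (borel :: real measure))
        (\<lambda>l \<omega>. \<lambda>j\<in>{N (l - 1) + 1..N l}. B (A (\<sigma> j)) \<omega>) {1..q}"
  proof -
    have disj: "disjoint_family_on (\<lambda>l. {N (l - 1) + 1..N l}) {1..q}"
      unfolding disjoint_family_on_def
    proof (intro ballI impI)
      fix l l' assume l: "l \<in> {1..q}" and l': "l' \<in> {1..q}" and ne: "l \<noteq> l'"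
      show "{N (l - 1) + 1..N l} \<inter> {N (l' - 1) + 1..N l'} = {}"
      proof (cases "l < l'")
        case True then have "N l \<le> N (l' - 1)" using Nmono by simp
        then show ?thesis by auto
      next
        case False then have "l' < l" using ne by simp
        then have "N l' \<le> N (l - 1)" using Nmono by simp
        then show ?thesis by auto
      qed
    qed
    have r: "indep_vars (\<lambda>l. PiM {N (l - 1) + 1..N l} (\<lambda>_. borel))
        (\<lambda>l \<omega>. restrict (\<lambda>i. Z i \<omega>) {N (l - 1) + 1..N l}) {1..q}"
      by (rule indep_vars_restrict[OF Zind _ disj]) (use Nle in auto)
    define Y where "Y = (\<lambda>l (v :: nat \<Rightarrow> real). \<lambda>j\<in>{N (l - 1) + 1..N l}. \<Sum>i\<in>{N (l - 1) + 1..j}. v i)"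
    have Ym: "Y l \<in> measurable (PiM {N (l - 1) + 1..N l} (\<lambda>_. borel)) (PiM {N (l - 1) + 1..N l} (\<lambda>_. borel))" for l
      unfolding Y_def
    proof (rule measurable_restrict)
      fix j assume j: "j \<in> {N (l - 1) + 1..N l}"
      show "(\<lambda>v::nat\<Rightarrow>real. \<Sum>i\<in>{N (l - 1) + 1..j}. v i) \<in> borel_measurable (PiM {N (l - 1) + 1..N l} (\<lambda>_. borel))"
      proof (rule borel_measurable_sum)
        fix i assume "i \<in> {N (l - 1) + 1..j}"
        then show "(\<lambda>v::nat\<Rightarrow>real. v i) \<in> borel_measurable (PiM {N (l - 1) + 1..N l} (\<lambda>_. borel))"
          using j by (intro measurable_component_singleton) auto
      qed
    qed
    have c: "indep_vars (\<lambda>l. PiM {N (l - 1) + 1..N l} (\<lambda>_. borel))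
        (\<lambda>l \<omega>. Y l (restrict (\<lambda>i. Z i \<omega>) {N (l - 1) + 1..N l})) {1..q}"
      by (rule indep_vars_compose2[OF r Ym])
    show ?thesis
    proof (rule iffD1[OF indep_vars_cong c])
      fix l assume l: "l \<in> {1..q}"
      show "(\<lambda>\<omega>. Y l (restrict (\<lambda>i. Z i \<omega>) {N (l - 1) + 1..N l})) = (\<lambda>\<omega>. \<lambda>j\<in>{N (l - 1) + 1..N l}. B (A (\<sigma> j)) \<omega>)"
      proof (rule ext)
        fix \<omega>
        have pt: "(\<Sum>i\<in>{N (l - 1) + 1..j}. restrict (\<lambda>i. Z i \<omega>) {N (l - 1) + 1..N l} i) = B (A (\<sigma> j)) \<omega>"
          if j: "j \<in> {N (l - 1) + 1..N l}" for j
        proof -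
          have "(\<Sum>i\<in>{N (l - 1) + 1..j}. restrict (\<lambda>i. Z i \<omega>) {N (l - 1) + 1..N l} i) = (\<Sum>i\<in>{N (l - 1) + 1..j}. Z i \<omega>)"
            using j by (intro sum.cong refl) auto
          also have "\<dots> = B (x j) \<omega>"
            unfolding Z_def
            by (rule tele[where e="N l"]) (use start[OF l] inner[OF l] j in auto)
          finally show ?thesis by (simp add: x_def)
        qed
        show "Y l (restrict (\<lambda>i. Z i \<omega>) {N (l - 1) + 1..N l}) = (\<lambda>j\<in>{N (l - 1) + 1..N l}. B (A (\<sigma> j)) \<omega>)"
          unfolding Y_def by (rule restrict_ext) (rule pt)
      qed
    qed auto
  qed
  show ?thesis
    using perm q pos sm goal1 goal2 unfolding Let_def N_def by blast
qed

end
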